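(* Let $(\mathsf P,\mathcal O)$ be a semitopology and $p\in\mathsf P$. Then in the semiframe $(\mathcal O,\subseteq,\between)$ we have $\mathcal K(\mathrm{nbhd}(p))=K(p)$.
   Context: A semitopology is a pair $(\mathsf P,\mathcal O)$ where $\mathcal O\subseteq\mathcal P(\mathsf P)$ contains $\varnothing,\mathsf P$ and is closed under arbitrary unions; $(\mathcal O,\subseteq,\between)$ is the semiframe with joins given by unions and $O\between O'$ meaning $O\cap O'\neq\varnothing$. $\mathrm{nbhd}(p)=\{O\in\mathcal O\mid p\in O\}$. Points $p,p'$ are intertwined when every open containing $p$ meets every open containing $p'$; $I(p)$ is the set of points intertwined with $p$; $K(p)=\mathrm{int}(I(p))$, the union of all open subsets of $I(p)$. In a semiframe $(X,\le,\ast)$ (complete join-semilattice with commutative relation $\ast$ satisfying $x\ast x$ for $x\ne\bot$ and $x\ast\bigvee Y\iff\exists y\in Y.\,x\ast y$), for $F\subseteq X$ write $y\ast F$ when $y\ast z$ for all $z\in F$; the abstract community is $\mathcal K(F)=\bigvee\{z\in X\mid\neg(z\ast c_F)\}$ where $c_F=\bigvee\{y\in X\mid\neg(y\ast F)\}$. *)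

theory Defs
  imports Main
begin

definition semitopology :: "'a set \<Rightarrow> 'a set set \<Rightarrow> bool" where
  "semitopology P Opens \<longleftrightarrow>
     Opens \<subseteq> Pow P \<and> {} \<in> Opens \<and> P \<in> Opens \<and>
     (\<forall>S. S \<subseteq> Opens \<longrightarrow> \<Union>S \<in> Opens)"

definition nbhd :: "'a set set \<Rightarrow> 'a \<Rightarrow> 'a set set" where
  "nbhd Opens p = {U \<in> Opens. p \<in> U}"

definition intertwined :: "'a set set \<Rightarrow> 'a \<Rightarrow> 'a \<Rightarrow> bool" where
  "intertwined Opens p p' \<longleftrightarrow>
     (\<forall>U \<in> Opens. \<forall>U' \<in> Opens. p \<in> U \<longrightarrow> p' \<in> U' \<longrightarrow> U \<inter> U' \<noteq> {})"

definition intertwined_set :: "'a set \<Rightarrow> 'a set set \<Rightarrow> 'a \<Rightarrow> 'a set" where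
  "intertwined_set P Opens p = {p' \<in> P. intertwined Opens p p'}"

definition sinterior :: "'a set set \<Rightarrow> 'a set \<Rightarrow> 'a set" where
  "sinterior Opens A = \<Union>{U \<in> Opens. U \<subseteq> A}"

definition community :: "'a set \<Rightarrow> 'a set set \<Rightarrow> 'a \<Rightarrow> 'a set" where
  "community P Opens p = sinterior Opens (intertwined_set P Opens p)"

text \<open>Abstract community in a semiframe given by carrier X, join operation J
(on subsets of X) and compatibility relation R:
  K(F) = J {z \<in> X. \<not> R z c_F}, where c_F = J {y \<in> X. \<not> (y R F)}.\<close>
definition sf_community :: "'x set \<Rightarrow> ('x set \<Rightarrow> 'x) \<Rightarrow> ('x \<Rightarrow> 'x \<Rightarrow> bool) \<Rightarrow> 'x set \<Rightarrow> 'x" where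
  "sf_community X J R F =
     (let c = J {y \<in> X. \<not> (\<forall>z \<in> F. R y z)} in J {z \<in> X. \<not> R z c})"

definition meets :: "'a set \<Rightarrow> 'a set \<Rightarrow> bool" where
  "meets A B \<longleftrightarrow> A \<inter> B \<noteq> {}"

end

theory Submission
  imports Defs
begin

theorem proposition9p25:
  fixes P :: "'a set" and Opens :: "'a set set" and p :: 'a
  assumes "semitopology P Opens" and "p \<in> P"
  shows "sf_community Opens Union meets (nbhd Opens p) = community P Opens p"
proof -
  define c where "c = \<Union>{y \<in> Opens. \<not> (\<forall>z \<in> nbhd Opens p. meets y z)}"
  have sub: "Opens \<subseteq> Pow P" using assms(1) unfolding semitopology_def by blast
  have "{z \<in> Opens. \<not> meets z c} = {U \<in> Opens. U \<subseteq> intertwined_set P Opens p}"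
  proof (intro set_eqI iffI)
    fix z assume z: "z \<in> {z \<in> Opens. \<not> meets z c}"
    have "z \<subseteq> intertwined_set P Opens p"
    proof
      fix q assume q: "q \<in> z"
      have "q \<in> P" using z q sub by blast
      moreover have "intertwined Opens p q"
        unfolding intertwined_def
      proof (intro ballI impI)
        fix U U' assume "U \<in> Opens" "U' \<in> Opens" "p \<in> U" "q \<in> U'"
        show "U \<inter> U' \<noteq> {}"
        proof
          assume "U \<inter> U' = {}"
          hence "U' \<subseteq> c" unfolding c_def nbhd_def meets_def
            using \<open>U \<in> Opens\<close> \<open>U' \<in> Opens\<close> \<open>p \<in> U\<close> by blast
          thus False using z q \<open>q \<in> U'\<close> unfolding meets_def by blast
        qed
      qed
      ultimately show "q \<in> intertwined_set P Opens p" unfolding intertwined_set_def by blast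
    qed
    thus "z \<in> {U \<in> Opens. U \<subseteq> intertwined_set P Opens p}" using z by blast
  next
    fix z assume z: "z \<in> {U \<in> Opens. U \<subseteq> intertwined_set P Opens p}"
    have "\<not> meets z c"
    proof
      assume "meets z c"
      then obtain q y U where "q \<in> z" "q \<in> y" "y \<in> Opens" "U \<in> Opens" "p \<in> U" "y \<inter> U = {}"
        unfolding meets_def c_def nbhd_def by blast
      moreover have "intertwined Opens p q" using z \<open>q \<in> z\<close> unfolding intertwined_set_def by blast
      ultimately show False unfolding intertwined_def by blast
    qed
    thus "z \<in> {z \<in> Opens. \<not> meets z c}" using z by blast
  qed
  thus ?thesis unfolding sf_community_def community_def sinterior_def Let_def c_def by simp
qed

end
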